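(* Let $p$ be a prime and let $\Phi_p$ be the set of all $\operatorname{fpt}(R,f)$, where $R$ ranges over $F$-pure rings of characteristic $p$ and $f$ over non-zero non-units of $R$. Let $\lambda\in\Phi_p$ and $e\ge1$. Then the following three statements hold (and are equivalent): (1) $\lfloor (p^e-1)\lambda\rfloor = p^e\langle\lambda\rangle_e$; (2) $\lambda\le p^e\,\langle\lambda\rangle^e$; (3) $\lambda\ge \frac{p^e}{p^e-1}\langle\lambda\rangle_e$.
   Context: A ring $R$ of characteristic $p$ is $F$-pure if $R\subseteq R^{1/p}$ splits as a map of $R$-modules. Roots and splitting. $R^{1/p^e}$ is the ring of formal $p^e$-th roots of elements of $R$, containing $R$ via $r\mapsto(r^{p^e})^{1/p^e}$. We write $f^{a/p^e}:=(f^a)^{1/p^e}$. The inclusion $R\cdot t\subseteq R^{1/p^e}$ splits if some $R$-linear $\theta:R^{1/p^e}\to R$ has $\theta(t)=1$. $F$-pure threshold. $(R,f^\lambda)$ is $F$-pure if $R\cdot f^{\lfloor (p^e-1)\lambda\rfloor/p^e}\subseteq R^{1/p^e}$ splits for all $e\ge1$. $\operatorname{fpt}(R,f)$ is the supremum of all $\lambda\ge0$ with $(R,f^\lambda)$ $F$-pure; it lies in $[0,1]$. Truncations and tails. For $\alpha\in(0,1]$ with non-terminating base $p$ expansion $\alpha=\sum_{e\ge1}a_e/p^e$ (digits $0\le a_e\le p-1$, not all eventually zero): - the $e$-th truncation is $\langle\alpha\rangle_e:=\sum_{i=1}^e a_i/p^i$; - the $e$-th tail is $\langle\alpha\rangle^e:=\alpha-\langle\alpha\rangle_e$.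 By convention $\langle0\rangle_e=\langle0\rangle^e=0$. *)

theory Defs
  imports Complex_Main "HOL-Computational_Algebra.Primes"
begin

text \<open>Splitting of R t in R^{1/p^e}. An element of R^{1/p^e} is x^{1/p^e} with x in R;
  we represent it by x. An R-linear map theta from R^{1/p^e} to R is then an additive map
  theta on R with theta(r^(p^e) * x) = r * theta(x), since r acts on x^{1/p^e} as
  (r^(p^e) x)^{1/p^e}.\<close>

definition frob_splits :: "nat \<Rightarrow> nat \<Rightarrow> 'a::comm_ring_1 \<Rightarrow> bool" where
  "frob_splits p e x \<longleftrightarrow>
     (\<exists>\<theta>::'a \<Rightarrow> 'a. (\<forall>u v. \<theta> (u + v) = \<theta> u + \<theta> v)
        \<and> (\<forall>r u. \<theta> (r ^ (p ^ e) * u) = r * \<theta> u)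
        \<and> \<theta> x = 1)"

definition F_pure_ring :: "nat \<Rightarrow> 'a::comm_ring_1 itself \<Rightarrow> bool" where
  "F_pure_ring p _ \<longleftrightarrow> frob_splits p 1 (1::'a)"

definition F_pure_pair :: "nat \<Rightarrow> 'a::comm_ring_1 \<Rightarrow> real \<Rightarrow> bool" where
  "F_pure_pair p f lam \<longleftrightarrow>
     (\<forall>e\<ge>1. frob_splits p e (f ^ nat \<lfloor>(real p ^ e - 1) * lam\<rfloor>))"

definition fpt :: "nat \<Rightarrow> 'a::comm_ring_1 \<Rightarrow> real" where
  "fpt p f = Sup {lam. lam \<ge> 0 \<and> F_pure_pair p f lam}"

text \<open>a is the digit sequence (a 1, a 2, ...) of a non-terminating base p expansion of alpha;
  a 0 is unused and fixed to 0.\<close>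
definition nonterm_digits :: "nat \<Rightarrow> real \<Rightarrow> (nat \<Rightarrow> nat) \<Rightarrow> bool" where
  "nonterm_digits p \<alpha> a \<longleftrightarrow> a 0 = 0 \<and> (\<forall>i. a i \<le> p - 1)
     \<and> (\<forall>N. \<exists>i>N. a i \<noteq> 0)
     \<and> (\<lambda>i. real (a (Suc i)) / real p ^ Suc i) sums \<alpha>"

definition truncation :: "nat \<Rightarrow> real \<Rightarrow> nat \<Rightarrow> real" where
  "truncation p \<alpha> e =
     (if \<alpha> = 0 then 0
      else (let a = (THE a. nonterm_digits p \<alpha> a) in
            \<Sum>i=1..e. real (a i) / real p ^ i))"

definition tail :: "nat \<Rightarrow> real \<Rightarrow> nat \<Rightarrow> real" where
  "tail p \<alpha> e = (if \<alpha> = 0 then 0 else \<alpha> - truncation p \<alpha> e)"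

end

theory Submission imports Defs begin

lemma fs_mono:
  assumes "frob_splits p e ((f::'a::comm_ring_1)^a)" "b \<le> a"
  shows "frob_splits p e (f^b)"
proof -
  obtain \<theta> where h: "\<forall>u v. \<theta>(u+v) = \<theta> u + \<theta> v" "\<forall>r u. \<theta> (r^(p^e)*u) = r * \<theta> u" "\<theta> (f^a) = 1"
    using assms(1) unfolding frob_splits_def by blast
  show ?thesis unfolding frob_splits_def
  proof (intro exI[of _ "\<lambda>u. \<theta> (f^(a-b)*u)"] conjI allI)
    fix u v show "\<theta> (f^(a-b)*(u+v)) = \<theta> (f^(a-b)*u) + \<theta> (f^(a-b)*v)" using h(1) by (simp add: distrib_left)
  next
    fix r u show "\<theta> (f^(a-b)*(r^(p^e)*u)) = r * \<theta> (f^(a-b)*u)" using h(2) by (metis mult.left_commute)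
  next
    show "\<theta> (f^(a-b)*f^b) = 1" using h(3) assms(2) by (metis le_add_diff_inverse2 power_add)
  qed
qed

lemma fs_nonunit:
  assumes "frob_splits p e ((f::'a::comm_ring_1)^a)" "p^e \<le> a"
  shows "f dvd 1"
proof -
  obtain \<theta> where h: "\<forall>u v. \<theta>(u+v) = \<theta> u + \<theta> v" "\<forall>r u. \<theta> (r^(p^e)*u) = r * \<theta> u" "\<theta> (f^a) = 1"
    using assms(1) unfolding frob_splits_def by blast
  have "f^a = f^(p^e) * f^(a - p^e)" using assms(2) by (metis le_add_diff_inverse power_add)
  then have "1 = f * \<theta> (f^(a - p^e))" using h by metis
  then show ?thesis by (rule dvdI)
qed

lemma fs_comp:
  assumes "frob_splits p e (x::'a::comm_ring_1)" "frob_splits p d y"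
  shows "frob_splits p (e+d) (x^(p^d)*y)"
proof -
  obtain \<theta> where h: "\<forall>u v. \<theta>(u+v) = \<theta> u + \<theta> v" "\<forall>r u. \<theta> (r^(p^e)*u) = r * \<theta> u" "\<theta> x = 1"
    using assms(1) unfolding frob_splits_def by blast
  obtain \<eta> where g: "\<forall>u v. \<eta>(u+v) = \<eta> u + \<eta> v" "\<forall>r u. \<eta> (r^(p^d)*u) = r * \<eta> u" "\<eta> y = 1"
    using assms(2) unfolding frob_splits_def by blast
  show ?thesis unfolding frob_splits_def
  proof (intro exI[of _ "\<lambda>u. \<theta> (\<eta> u)"] conjI allI)
    fix u v show "\<theta> (\<eta> (u+v)) = \<theta> (\<eta> u) + \<theta> (\<eta> v)" using h(1) g(1) by simp
  next
    fix r u
    have "(r::'a)^(p^(e+d)) = (r^(p^e))^(p^d)" by (simp only: power_add power_mult)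
    then show "\<theta> (\<eta> (r^(p^(e+d))*u)) = r * \<theta> (\<eta> u)" using h(2) g(2) by simp
  next
    show "\<theta> (\<eta> (x^(p^d)*y)) = 1" using h(3) g(2,3) by (metis mult.right_neutral)
  qed
qed

lemma fs_zero: "frob_splits p 0 (1::'a::comm_ring_1)"
  unfolding frob_splits_def by (intro exI[of _ "\<lambda>u. u"]) auto

lemma fs_one_all:
  assumes "F_pure_ring p TYPE('a::comm_ring_1)"
  shows "frob_splits p e (1::'a)"
proof (induction e)
  case 0 then show ?case by (rule fs_zero)
next
  case (Suc e)
  have "frob_splits p 1 (1::'a)" using assms unfolding F_pure_ring_def .
  from fs_comp[OF Suc this] show ?case by simp
qed

lemma fs_descent:
  assumes "CHAR('a::comm_ring_1) = p" "prime p" "frob_splits p (e+k) ((f::'a)^a)"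
  shows "frob_splits p e (f^(a div p^k))"
proof -
  obtain \<theta> where h: "\<forall>u v. \<theta>(u+v) = \<theta> u + \<theta> v" "\<forall>r u. \<theta> (r^(p^(e+k))*u) = r * \<theta> u" "\<theta> (f^a) = 1"
    using assms(3) unfolding frob_splits_def by blast
  have fd: "(u+v)^(p^k) = u^(p^k) + v^(p^k)" for u v :: 'a
    by (rule freshmans_dream'[where n=k]) (use assms in auto)
  show ?thesis unfolding frob_splits_def
  proof (intro exI[of _ "\<lambda>u. \<theta> (u^(p^k) * f^(a mod p^k))"] conjI allI)
    fix u v show "\<theta> ((u+v)^(p^k) * f^(a mod p^k)) = \<theta> (u^(p^k) * f^(a mod p^k)) + \<theta> (v^(p^k) * f^(a mod p^k))"
      using h(1) by (simp add: fd distrib_right)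
  next
    fix r u
    have "(r^(p^e)*u)^(p^k) * f^(a mod p^k) = r^(p^(e+k)) * (u^(p^k) * f^(a mod p^k))"
      by (simp add: power_mult_distrib power_add power_mult[symmetric] mult.assoc)
    then show "\<theta> ((r^(p^e)*u)^(p^k) * f^(a mod p^k)) = r * \<theta> (u^(p^k) * f^(a mod p^k))" using h(2) by simp
  next
    have "(f^(a div p^k))^(p^k) * f^(a mod p^k) = f^a"
      by (simp add: power_mult[symmetric] power_add[symmetric] div_mult_mod_eq)
    then show "\<theta> ((f^(a div p^k))^(p^k) * f^(a mod p^k)) = 1" using h(3) by simp
  qed
qed


lemma sum_shift1: "(\<Sum>i<n. h (Suc i)) = (\<Sum>i=1..n. (h::nat \<Rightarrow> real) i)"
  by (induction n) (auto simp: sum.cl_ivl_Suc)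

lemma digits_partial:
  fixes p :: nat and \<alpha> :: real
  assumes p2: "p \<ge> 2" and nd: "nonterm_digits p \<alpha> b"
  shows "(\<Sum>i=1..n. real (b i) / real p ^ i) = of_int (\<lceil>real p ^ n * \<alpha>\<rceil> - 1) / real p ^ n"
proof -
  define g where "g i = real (b (Suc i)) / real p ^ Suc i" for i
  have gs: "g sums \<alpha>" using nd unfolding nonterm_digits_def g_def by simp
  have bd: "b i \<le> p - 1" for i using nd unfolding nonterm_digits_def by simp
  have summ: "summable g" using gs by (rule sums_summable)
  define R where "R = (\<Sum>j. g (j + n))"
  define T where "T = (\<Sum>i=1..n. real (b i) / real p ^ i)"
  have "\<alpha> = R + (\<Sum>i<n. g i)" unfolding R_def
    using suminf_split_initial_segment[OF summ, of n] sums_unique[OF gs] by simp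
  also have "(\<Sum>i<n. g i) = T" unfolding g_def T_def by (rule sum_shift1)
  finally have aRT: "\<alpha> = R + T" .
  have pp: "real p > 1" using p2 by simp
  have g0: "0 \<le> g i" for i unfolding g_def by simp
  have sR: "summable (\<lambda>j. g (j + n))" using summ by simp
  obtain i where i: "i > n" "b i \<noteq> 0" using nd unfolding nonterm_digits_def by blast
  have "0 < g ((i - 1 - n) + n)" unfolding g_def using i p2 by (simp add: Suc_diff_Suc)
  then have Rpos: "0 < R" unfolding R_def using suminf_pos2[OF sR, of "i - 1 - n"] g0 by simp
  define h where "h j = (real p - 1) / real p ^ Suc n * (1 / real p) ^ j" for j
  have geo: "(\<lambda>j. (1 / real p) ^ j) sums (1 / (1 - 1 / real p))"
    by (rule geometric_sums) (use pp in simp)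
  have hs: "h sums ((real p - 1) / real p ^ Suc n * (1 / (1 - 1 / real p)))"
    unfolding h_def by (rule sums_mult[OF geo])
  have hval: "(real p - 1) / real p ^ Suc n * (1 / (1 - 1 / real p)) = 1 / real p ^ n"
    using pp by (simp add: field_simps)
  have gh: "g (j + n) \<le> h j" for j
  proof -
    have "real (b (Suc (j + n))) \<le> real p - 1" using bd[of "Suc (j+n)"] p2 by linarith
    then have "real (b (Suc (j + n))) / real p ^ Suc (j + n) \<le> (real p - 1) / real p ^ Suc (j + n)"
      by (simp add: divide_right_mono)
    also have "(real p - 1) / real p ^ Suc (j + n) = h j" unfolding h_def
      using pp by (simp add: power_add power_divide field_simps)
    finally show ?thesis unfolding g_def by simp
  qed
  have Rle: "R \<le> 1 / real p ^ n"
  proof -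
    have "R \<le> suminf h" unfolding R_def by (rule suminf_le[OF gh sR sums_summable[OF hs]])
    also have "suminf h = 1 / real p ^ n" using sums_unique[OF hs] hval by simp
    finally show ?thesis .
  qed
  define N where "N = (\<Sum>i=1..n. b i * p ^ (n - i))"
  have "real p ^ n * T = (\<Sum>i=1..n. real (b i) * (real p ^ n / real p ^ i))"
    unfolding T_def by (simp add: sum_distrib_left field_simps)
  also have "\<dots> = real N" unfolding N_def of_nat_sum
  proof (rule sum.cong)
    fix x assume x: "x \<in> {1..n}"
    have "real (p ^ (n - x)) = real p ^ (n - x)" by (rule of_nat_power)
    also have "\<dots> = real p ^ n / real p ^ x" by (rule power_diff) (use pp x in auto)
    finally show "real (b x) * (real p ^ n / real p ^ x) = real (b x * p ^ (n - x))" by simp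
  qed simp
  finally have TN: "real p ^ n * T = real N" .
  have ppos: "real p ^ n > 0" using pp by simp
  have "real p ^ n * \<alpha> = real N + real p ^ n * R" using aRT TN by (simp add: algebra_simps)
  moreover have "0 < real p ^ n * R" using Rpos ppos by simp
  moreover have "real p ^ n * R \<le> 1" using Rle ppos by (simp add: field_simps)
  ultimately have "\<lceil>real p ^ n * \<alpha>\<rceil> = int N + 1"
    by (intro ceiling_unique) auto
  then show ?thesis unfolding T_def[symmetric] using TN ppos by (simp add: field_simps)
qed

lemma digits_unique:
  assumes p2: "p \<ge> 2" and "nonterm_digits p \<alpha> a" "nonterm_digits p \<alpha> b"
  shows "a = b"
proof
  fix i
  show "a i = b i"
  proof (cases i)
    case 0 then show ?thesis using assms unfolding nonterm_digits_def by simp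
  next
    case (Suc m)
    have "(\<Sum>i=1..Suc m. real (a i) / real p ^ i) = (\<Sum>i=1..Suc m. real (b i) / real p ^ i)"
      "(\<Sum>i=1..m. real (a i) / real p ^ i) = (\<Sum>i=1..m. real (b i) / real p ^ i)"
      by (simp_all only: digits_partial[OF p2 assms(2)] digits_partial[OF p2 assms(3)])
    then have "real (a (Suc m)) / real p ^ Suc m = real (b (Suc m)) / real p ^ Suc m"
      by (simp add: sum.cl_ivl_Suc)
    then show ?thesis using Suc p2 by simp
  qed
qed

lemma trunc_ceiling:
  fixes p :: nat and \<alpha> :: real
  assumes p2: "p \<ge> 2" and pos: "0 < \<alpha>" and le1: "\<alpha> \<le> 1"
  shows "truncation p \<alpha> e = of_int (\<lceil>real p ^ e * \<alpha>\<rceil> - 1) / real p ^ e"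
proof -
  have pp: "real p > 1" using p2 by simp
  define c :: "nat \<Rightarrow> int" where "c n = \<lceil>real p ^ n * \<alpha>\<rceil> - 1" for n
  have cb1: "of_int (c n) < real p ^ n * \<alpha>" for n
    unfolding c_def using ceiling_correct[of "real p ^ n * \<alpha>"] by simp
  have cb2: "real p ^ n * \<alpha> \<le> of_int (c n) + 1" for n
    unfolding c_def using ceiling_correct[of "real p ^ n * \<alpha>"] by simp
  have c0: "c 0 = 0" unfolding c_def using pos le1 by (simp add: ceiling_unique)
  have dig1: "int p * c n \<le> c (Suc n)" for n
  proof -
    have "real p * of_int (c n) < real p * (real p ^ n * \<alpha>)" using cb1[of n] pp by simp
    also have "\<dots> = real p ^ Suc n * \<alpha>" by simp
    also have "\<dots> \<le> of_int (c (Suc n)) + 1" by (rule cb2)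
    finally have "of_int (int p * c n) < (of_int (c (Suc n) + 1) :: real)" by simp
    then show ?thesis by (simp only: of_int_less_iff)
  qed
  have dig2: "c (Suc n) \<le> int p * c n + int p - 1" for n
  proof -
    have "of_int (c (Suc n)) < real p ^ Suc n * \<alpha>" by (rule cb1)
    also have "\<dots> = real p * (real p ^ n * \<alpha>)" by simp
    also have "\<dots> \<le> real p * (of_int (c n) + 1)" using cb2[of n] pp by simp
    finally have "of_int (c (Suc n)) < (of_int (int p * c n + int p) :: real)" by (simp add: algebra_simps)
    then have "c (Suc n) < int p * c n + int p" by (simp only: of_int_less_iff)
    then show ?thesis by simp
  qed
  define a where "a i = (if i = 0 then 0 else nat (c i - int p * c (i - 1)))" for i
  have aS: "real (a (Suc n)) = of_int (c (Suc n)) - real p * of_int (c n)" for n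
    unfolding a_def using dig1[of n] by simp
  have psum: "(\<Sum>i=1..n. real (a i) / real p ^ i) = of_int (c n) / real p ^ n" for n
  proof (induction n)
    case 0 then show ?case using c0 by simp
  next
    case (Suc n)
    have "(\<Sum>i=1..Suc n. real (a i) / real p ^ i) = of_int (c n) / real p ^ n + real (a (Suc n)) / real p ^ Suc n"
      using Suc by (simp add: sum.cl_ivl_Suc)
    also have "\<dots> = of_int (c (Suc n)) / real p ^ Suc n" unfolding aS using pp by (simp add: field_simps)
    finally show ?case .
  qed
  have nd: "nonterm_digits p \<alpha> a"
    unfolding nonterm_digits_def
  proof (intro conjI allI)
    show "a 0 = 0" unfolding a_def by simp
  next
    fix i show "a i \<le> p - 1"
    proof (cases i)
      case 0 then show ?thesis unfolding a_def by simp
    next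
      case (Suc m) then show ?thesis unfolding a_def using dig2[of m] by simp
    qed
  next
    fix N show "\<exists>i>N. a i \<noteq> 0"
    proof (rule ccontr)
      assume "\<not> (\<exists>i>N. a i \<noteq> 0)"
      then have z: "\<And>i. i > N \<Longrightarrow> a i = 0" by auto
      define K where "K = of_int (c N) / real p ^ N"
      have const: "of_int (c n) / real p ^ n = K" if "n \<ge> N" for n
        using that
      proof (induction n rule: dec_induct)
        case base then show ?case unfolding K_def by simp
      next
        case (step n)
        have "of_int (c (Suc n)) / real p ^ Suc n = (\<Sum>i=1..Suc n. real (a i) / real p ^ i)" by (rule psum[symmetric])
        also have "\<dots> = (\<Sum>i=1..n. real (a i) / real p ^ i)" using z[of "Suc n"] step by (simp add: sum.cl_ivl_Suc)
        also have "\<dots> = K" using psum[of n] step by simp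
        finally show ?case .
      qed
      have Klt: "K < \<alpha>" unfolding K_def using cb1[of N] pp by (simp add: field_simps)
      obtain m where m: "(1 / real p) ^ m < \<alpha> - K" using real_arch_pow_inv[of "\<alpha> - K" "1 / real p"] Klt pp by auto
      have "(1 / real p) ^ (m + N) \<le> (1 / real p) ^ m" using pp by (simp add: power_decreasing)
      with m have m2: "1 / real p ^ (m + N) < \<alpha> - K" by (simp add: power_divide)
      have "\<alpha> \<le> (of_int (c (m+N)) + 1) / real p ^ (m+N)" using cb2[of "m+N"] pp by (simp add: field_simps)
      also have "\<dots> = K + 1 / real p ^ (m + N)" using const[of "m+N"] by (simp add: add_divide_distrib)
      finally show False using m2 by simp
    qed
  next
    have eq: "(\<lambda>n. \<Sum>i<n. real (a (Suc i)) / real p ^ Suc i) = (\<lambda>n. of_int (c n) / real p ^ n)"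
      using sum_shift1[of "\<lambda>i. real (a i) / real p ^ i"] psum by simp
    have lo: "\<alpha> - inverse (real p ^ n) \<le> of_int (c n) / real p ^ n" for n
    proof -
      have "real p^n * \<alpha> - 1 \<le> of_int (c n)" using cb2[of n] by linarith
      then have "(real p^n*\<alpha> - 1)/real p^n \<le> of_int (c n)/real p^n" by (rule divide_right_mono) (use pp in simp)
      moreover have "(real p^n*\<alpha> - 1)/real p^n = \<alpha> - inverse (real p^n)" using pp by (simp add: field_simps)
      ultimately show ?thesis by simp
    qed
    have hi: "of_int (c n) / real p ^ n \<le> \<alpha>" for n
      using cb1[of n] pp by (simp add: field_simps)
    have l1: "(\<lambda>n. \<alpha> - inverse (real p ^ n)) \<longlonglongrightarrow> \<alpha> - 0"
      by (intro tendsto_intros LIMSEQ_inverse_realpow_zero pp)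
    have "(\<lambda>n. of_int (c n) / real p ^ n) \<longlonglongrightarrow> \<alpha>"
      by (rule tendsto_sandwich[of "\<lambda>n. \<alpha> - inverse (real p ^ n)" _ sequentially "\<lambda>n. \<alpha>"])
        (use lo hi l1 in auto)
    then show "(\<lambda>i. real (a (Suc i)) / real p ^ Suc i) sums \<alpha>"
      unfolding sums_def eq .
  qed
  have "(THE a. nonterm_digits p \<alpha> a) = a"
    using nd digits_unique[OF p2] by (intro the_equality) auto
  then show ?thesis unfolding truncation_def using pos digits_partial[OF p2 nd] by simp
qed


definition sp :: "nat \<Rightarrow> 'a::comm_ring_1 \<Rightarrow> nat \<Rightarrow> nat" where
  "sp p f e = (GREATEST a. frob_splits p e (f^a))"

fun Xs :: "nat \<Rightarrow> nat \<Rightarrow> nat \<Rightarrow> nat" where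
  "Xs q s 0 = 0"
| "Xs q s (Suc k) = Xs q s k * q + s"

lemma Xs_real: "real (Xs q s k) * (real q - 1) = real s * (real q ^ k - 1)"
  by (induction k) (auto simp: algebra_simps)

context
  fixes p :: nat and f :: "'a::comm_ring_1"
  assumes pr: "prime p" and ch: "CHAR('a) = p" and fp: "F_pure_ring p TYPE('a)" and nu: "\<not> f dvd 1"
begin

lemma p2: "p \<ge> 2" using pr prime_ge_2_nat by blast

lemma P0: "frob_splits p e (f^0)" using fs_one_all[OF fp] by simp

lemma Pbound: "frob_splits p e (f^a) \<Longrightarrow> a < p^e"
  using fs_nonunit nu not_less by blast

lemma s_spec: "frob_splits p e (f^(sp p f e))"
  unfolding sp_def by (rule GreatestI_nat[of _ 0 "p^e"]) (use P0 Pbound less_imp_le in blast)+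

lemma s_max: "frob_splits p e (f^a) \<Longrightarrow> a \<le> sp p f e"
  unfolding sp_def by (rule Greatest_le_nat[of _ _ "p^e"]) (use Pbound less_imp_le in blast)+

lemma s_super: "sp p f e * p^d + sp p f d \<le> sp p f (e+d)"
proof -
  have "frob_splits p (e+d) ((f^(sp p f e))^(p^d) * f^(sp p f d))"
    by (rule fs_comp[OF s_spec s_spec])
  then have "frob_splits p (e+d) (f^(sp p f e * p^d + sp p f d))"
    by (simp add: power_mult power_add)
  then show ?thesis by (rule s_max)
qed

lemma s_desc: "sp p f (e+k) div p^k \<le> sp p f e"
  by (rule s_max, rule fs_descent[OF ch pr s_spec])

definition "SS = {lam. lam \<ge> 0 \<and> F_pure_pair p f lam}"

lemma M1:
  assumes "\<mu> \<in> SS" "d \<ge> 1"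
  shows "(real p^d - 1) * \<mu> < real (sp p f d) + 1"
proof -
  have m0: "\<mu> \<ge> 0" and fpp: "F_pure_pair p f \<mu>" using assms(1) unfolding SS_def by auto
  define x where "x = (real p^d - 1) * \<mu>"
  have "real p ^ d \<ge> 1" using p2 by simp
  then have x0: "x \<ge> 0" unfolding x_def using m0 by simp
  have "frob_splits p d (f ^ nat \<lfloor>x\<rfloor>)" using fpp assms(2) unfolding F_pure_pair_def x_def by blast
  then have "nat \<lfloor>x\<rfloor> \<le> sp p f d" by (rule s_max)
  then have "of_int \<lfloor>x\<rfloor> \<le> real (sp p f d)" using x0 by linarith
  then show ?thesis unfolding x_def[symmetric] by linarith
qed

lemma M2:
  assumes "\<mu> \<in> SS" "e \<ge> 1"
  shows "real p^e * \<mu> \<le> real (sp p f e) + 1"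
proof (rule ccontr)
  assume nc: "\<not> real p^e * \<mu> \<le> real (sp p f e) + 1"
  define \<epsilon> where "\<epsilon> = real p^e * \<mu> - (real (sp p f e) + 1)"
  have eps: "\<epsilon> > 0" using nc unfolding \<epsilon>_def by simp
  have pp: "real p > 1" using p2 by simp
  obtain k where k: "\<mu> / \<epsilon> < real p ^ k" using real_arch_pow[OF pp] by blast
  have a1: "(real p^(e+k) - 1) * \<mu> < real (sp p f (e+k)) + 1" by (rule M1) (use assms in auto)
  have "sp p f (e+k) div p^k < sp p f e + 1" using s_desc[of e k] by simp
  then have "sp p f (e+k) < (sp p f e + 1) * p^k" using p2 by (simp add: div_less_iff_less_mult)
  then have "sp p f (e+k) + 1 \<le> (sp p f e + 1) * p^k" by simp
  then have "real (sp p f (e+k) + 1) \<le> real ((sp p f e + 1) * p^k)" by (simp only: of_nat_le_iff)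
  then have a2: "real (sp p f (e+k)) + 1 \<le> (real (sp p f e) + 1) * real p^k" by (simp add: algebra_simps)
  have "real p ^ k * (real p^e * \<mu>) - \<mu> < (real (sp p f e) + 1) * real p^k"
    using a1 a2 by (simp add: power_add algebra_simps)
  then have "real p ^ k * \<epsilon> < \<mu>" unfolding \<epsilon>_def by (simp add: algebra_simps)
  moreover have "\<mu> < \<epsilon> * real p ^ k" using k eps by (simp add: field_simps)
  ultimately show False by (simp add: mult.commute)
qed

lemma SS_le1: "\<mu> \<in> SS \<Longrightarrow> \<mu> \<le> 1"
proof -
  assume a: "\<mu> \<in> SS"
  have "real p * \<mu> \<le> real (sp p f 1) + 1" using M2[OF a, of 1] by simp
  moreover have "sp p f 1 + 1 \<le> p" using Pbound[OF s_spec, of 1] by simp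
  ultimately have "real p * \<mu> \<le> real p * 1" by linarith
  then show ?thesis using p2 by simp
qed

lemma M3: "real (sp p f m) / real p^m \<in> SS"
proof -
  have pp: "real p > 1" using p2 by simp
  have "F_pure_pair p f (real (sp p f m) / real p^m)"
    unfolding F_pure_pair_def
  proof (intro allI impI)
    fix d :: nat assume "d \<ge> 1"
    define x where "x = (real p ^ d - 1) * (real (sp p f m) / real p ^ m)"
    have xle: "x \<le> real p ^ d * real (sp p f m) / real p ^ m" unfolding x_def
      using pp by (simp add: field_simps)
    have key: "frob_splits p d (f ^ nat \<lfloor>x\<rfloor>)"
    proof (cases "d \<le> m")
      case True
      have P: "frob_splits p d (f ^ (sp p f m div p^(m-d)))"
        using fs_descent[OF ch pr, of d "m-d" f "sp p f m"] s_spec[of m] True by simp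
      have "real (p ^ (m-d)) = real p ^ (m-d)" by (rule of_nat_power)
      also have "\<dots> = real p^m / real p^d" by (rule power_diff) (use pp True in auto)
      finally have pd: "real (p ^ (m-d)) = real p^m / real p^d" .
      have "real p ^ d * real (sp p f m) / real p ^ m = real (sp p f m) / real (p^(m-d))"
        unfolding pd using pp by (simp add: field_simps)
      moreover have "\<lfloor>x\<rfloor> \<le> \<lfloor>real p ^ d * real (sp p f m) / real p ^ m\<rfloor>" by (rule floor_mono[OF xle])
      ultimately have "\<lfloor>x\<rfloor> \<le> \<lfloor>real (sp p f m) / real (p^(m-d))\<rfloor>" by simp
      then have "\<lfloor>x\<rfloor> \<le> int (sp p f m div p^(m-d))" by (simp only: floor_divide_of_nat_eq)
      then have "nat \<lfloor>x\<rfloor> \<le> sp p f m div p^(m-d)" by linarith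
      then show ?thesis by (rule fs_mono[OF P])
    next
      case False
      have "frob_splits p (m + (d-m)) ((f^(sp p f m))^(p^(d-m)) * f^0)"
        by (rule fs_comp[OF s_spec P0])
      then have P: "frob_splits p d (f ^ (sp p f m * p^(d-m)))"
        using False by (simp add: power_mult)
      have "real (p ^ (d-m)) = real p ^ (d-m)" by (rule of_nat_power)
      also have "\<dots> = real p^d / real p^m" by (rule power_diff) (use pp False in auto)
      finally have pd: "real (p ^ (d-m)) = real p^d / real p^m" .
      have "real p ^ d * real (sp p f m) / real p ^ m = real (sp p f m * p^(d-m))"
        unfolding of_nat_mult pd using pp by (simp add: field_simps)
      moreover have "\<lfloor>x\<rfloor> \<le> \<lfloor>real p ^ d * real (sp p f m) / real p ^ m\<rfloor>" by (rule floor_mono[OF xle])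
      ultimately have "\<lfloor>x\<rfloor> \<le> \<lfloor>real (sp p f m * p^(d-m))\<rfloor>" by simp
      then have "\<lfloor>x\<rfloor> \<le> int (sp p f m * p^(d-m))" by (simp only: floor_of_nat)
      then have "nat \<lfloor>x\<rfloor> \<le> sp p f m * p^(d-m)" by linarith
      then show ?thesis by (rule fs_mono[OF P])
    qed
    then show "frob_splits p d (f ^ nat \<lfloor>(real p ^ d - 1) * (real (sp p f m) / real p ^ m)\<rfloor>)"
      unfolding x_def .
  qed
  then show ?thesis unfolding SS_def by simp
qed

lemma SS_bdd: "bdd_above SS" using SS_le1 by (intro bdd_aboveI) auto

lemma lam_ge: "real (sp p f m) / real p^m \<le> Sup SS"
  by (rule cSup_upper[OF M3 SS_bdd])

lemma lam_le: "e \<ge> 1 \<Longrightarrow> Sup SS \<le> (real (sp p f e) + 1) / real p^e"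
proof -
  assume e: "e \<ge> 1"
  have pp: "real p > 1" using p2 by simp
  show ?thesis
  proof (rule cSup_least)
    show "SS \<noteq> {}" using M3 by blast
    fix \<mu> assume "\<mu> \<in> SS"
    then show "\<mu> \<le> (real (sp p f e) + 1) / real p^e" using M2[OF _ e] pp by (simp add: field_simps)
  qed
qed

lemma Xs_splits: "frob_splits p (k*e) (f^(Xs (p^e) (sp p f e) k))"
proof (induction k)
  case 0 then show ?case using P0 by simp
next
  case (Suc k)
  have "frob_splits p (k*e + e) ((f^(Xs (p^e) (sp p f e) k))^(p^e) * f^(sp p f e))"
    by (rule fs_comp[OF Suc s_spec])
  moreover have "(f^(Xs (p^e) (sp p f e) k))^(p^e) * f^(sp p f e) = f^(Xs (p^e) (sp p f e) (Suc k))"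
    by (simp add: power_mult power_add)
  moreover have "k*e + e = Suc k * e" by simp
  ultimately show ?case by simp
qed

lemma lam_ge2:
  assumes "e \<ge> 1"
  shows "real (sp p f e) / (real p^e - 1) \<le> Sup SS"
proof (rule ccontr)
  assume nc: "\<not> ?thesis"
  define q where "q = real p ^ e"
  define C where "C = real (sp p f e) / (q - 1)"
  have q1: "q > 1" unfolding q_def using p2 assms by (simp add: one_less_power)
  have C0: "C \<ge> 0" unfolding C_def using q1 by simp
  define \<epsilon> where "\<epsilon> = C - Sup SS"
  have eps: "\<epsilon> > 0" using nc unfolding \<epsilon>_def C_def q_def by simp
  obtain k where k: "C / \<epsilon> < q ^ k" using real_arch_pow[OF q1] by blast
  have "real (Xs (p^e) (sp p f e) k) \<le> real (sp p f (k*e))" using s_max[OF Xs_splits] by simp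
  then have "real (Xs (p^e) (sp p f e) k) / real p^(k*e) \<le> real (sp p f (k*e)) / real p^(k*e)"
    by (rule divide_right_mono) simp
  then have "real (Xs (p^e) (sp p f e) k) / real p^(k*e) \<le> Sup SS"
    using lam_ge[of "k*e"] by linarith
  moreover have "real p^(k*e) = q^k" unfolding q_def by (simp add: power_mult mult.commute)
  moreover have "real (Xs (p^e) (sp p f e) k) = C * (q^k - 1)"
    using Xs_real[of "p^e" "sp p f e" k] q1 unfolding C_def q_def by (simp add: field_simps)
  ultimately have "C * (q^k - 1) / q^k \<le> Sup SS" by simp
  moreover have "C * (q^k - 1) / q^k = C - C / q^k" using q1 by (simp add: field_simps)
  ultimately have "\<epsilon> \<le> C / q^k" unfolding \<epsilon>_def by simp
  then have "\<epsilon> * q^k \<le> C" using q1 by (simp add: field_simps)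
  moreover have "C < \<epsilon> * q^k" using k eps by (simp add: field_simps)
  ultimately show False by simp
qed

end


theorem mainTheorem5:
  fixes p e :: nat and f :: "'a::comm_ring_1" and lam :: real
  assumes "prime p"
    and "CHAR('a) = p"
    and "F_pure_ring p TYPE('a)"
    and "f \<noteq> 0" and "\<not> f dvd 1"
    and "lam = fpt p f"
    and "e \<ge> 1"
  shows "\<lfloor>(real p ^ e - 1) * lam\<rfloor> = real p ^ e * truncation p lam e
    \<and> lam \<le> real p ^ e * tail p lam e
    \<and> lam \<ge> real p ^ e / (real p ^ e - 1) * truncation p lam e"
proof -
  note ctx = assms(1,2,3,5)
  have lamS: "lam = Sup (SS p f)" using assms(6) unfolding fpt_def SS_def[OF ctx] by simp
  define q where "q = real p ^ e"
  define s where "s = real (sp p f e)"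
  have p2: "p \<ge> 2" using assms(1) prime_ge_2_nat by blast
  have q1: "q > 1" unfolding q_def using p2 assms(7) by (simp add: one_less_power)
  have K1: "s \<le> (q - 1) * lam" using lam_ge2[OF ctx assms(7)] q1 unfolding lamS q_def s_def
    by (simp add: field_simps)
  have K2': "lam \<le> (s + 1) / q" using lam_le[OF ctx assms(7)] unfolding lamS q_def s_def by simp
  then have K2: "q * lam \<le> s + 1" using q1 by (simp add: pos_le_divide_eq mult.commute)
  have l0: "lam \<ge> 0" using lam_ge[OF ctx, of 0] unfolding lamS by simp
  have l1: "lam \<le> 1" using SS_le1[OF ctx] cSup_least[of "SS p f" 1] M3[OF ctx] unfolding lamS by blast
  show ?thesis
  proof (cases "lam = 0")
    case True then show ?thesis unfolding truncation_def tail_def by simp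
  next
    case False
    then have lp: "lam > 0" using l0 by simp
    define T where "T = \<lceil>q * lam\<rceil> - 1"
    have tr: "truncation p lam e = of_int T / q" unfolding T_def q_def
      by (rule trunc_ceiling[OF p2 lp l1])
    have "\<lceil>q * lam\<rceil> \<le> \<lceil>s + 1\<rceil>" using K2 by (rule ceiling_mono)
    moreover have "\<lceil>s + 1\<rceil> = int (sp p f e) + 1" unfolding s_def by simp
    ultimately have "T \<le> int (sp p f e)" unfolding T_def by simp
    then have "of_int T \<le> s" unfolding s_def by simp
    then have T1: "of_int T \<le> (q - 1) * lam" using K1 by simp
    have "q * lam \<le> of_int T + 1" unfolding T_def using le_of_int_ceiling[of "q*lam"] by simp
    moreover have "(q-1)*lam = q*lam - lam" by (simp add: algebra_simps)
    ultimately have T2: "(q - 1) * lam < of_int T + 1" using lp by linarith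
    have fl: "\<lfloor>(q - 1) * lam\<rfloor> = T" using T1 T2 by (intro floor_unique) auto
    have c1: "real_of_int \<lfloor>(q - 1) * lam\<rfloor> = q * truncation p lam e" using fl tr q1 by simp
    have c2: "lam \<le> q * tail p lam e" unfolding tail_def using False tr T1 q1 by (simp add: algebra_simps)
    have c3: "lam \<ge> q / (q - 1) * truncation p lam e" using tr T1 q1 by (simp add: field_simps)
    show ?thesis using c1 c2 c3 unfolding q_def by simp
  qed
qed

end
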